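(* Let $n\ge 1$ and let $d$ be a positive integer with $d\le n$. The number of closed walks of length $d$ in the graph $G(n,312)$ is $\binom{2d}{d}$.
   Context: For a sequence $x=x_1\cdots x_m$ of distinct real numbers, its standardization $\Pi(x)$ is the unique permutation $\pi\in\mathfrak S_m$ with $\pi_i<\pi_j \iff x_i<x_j$ for all $i,j$. A permutation $\pi\in\mathfrak S_m$ avoids $312$ if there are no indices $i<j<k$ with $\pi_j<\pi_k<\pi_i$; $\mathfrak S_m(312)$ denotes the set of such permutations. The graph $G(n,312)$ is the directed multigraph with vertex set $\mathfrak S_n(312)$ having, for each $\sigma=\sigma_1\cdots\sigma_{n+1}\in\mathfrak S_{n+1}(312)$, one directed edge labelled $\sigma$ from $\Pi(\sigma_1\cdots\sigma_n)$ (its tail) to $\Pi(\sigma_2\cdots\sigma_{n+1})$ (its head). A closed walk of length $d$ is a list of $d$ edges $(e_1,\dots,e_d)$ with $\mathrm{head}(e_i)=\mathrm{tail}(e_{i+1})$ for $1\le i\le d-1$ and $\mathrm{head}(e_d)=\mathrm{tail}(e_1)$; different cyclic shifts of a closed walk count as different closed walks. *)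

theory Defs
  imports Main
begin

definition perms :: "nat \<Rightarrow> nat list set" where
  "perms m = {p. length p = m \<and> distinct p \<and> set p = {1..m}}"

definition standardize :: "nat list \<Rightarrow> nat list" where
  "standardize xs = map (\<lambda>x. card {y \<in> set xs. y \<le> x}) xs"

definition avoids312 :: "nat list \<Rightarrow> bool" where
  "avoids312 p \<longleftrightarrow> \<not> (\<exists>i j k. i < j \<and> j < k \<and> k < length p \<and> p ! j < p ! k \<and> p ! k < p ! i)"

definition Av312 :: "nat \<Rightarrow> nat list set" where
  "Av312 m = {p \<in> perms m. avoids312 p}"

text \<open>Edges of G(n,312) are labelled by sigma in S_{n+1}(312); tail and head of such an edge.\<close>
definition edge_tail :: "nat list \<Rightarrow> nat list" where
  "edge_tail \<sigma> = standardize (butlast \<sigma>)"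

definition edge_head :: "nat list \<Rightarrow> nat list" where
  "edge_head \<sigma> = standardize (tl \<sigma>)"

definition closed_walks :: "nat \<Rightarrow> nat \<Rightarrow> nat list list set" where
  "closed_walks n d = {es. length es = d \<and> set es \<subseteq> Av312 (n + 1)
      \<and> (\<forall>i. i + 1 < d \<longrightarrow> edge_head (es ! i) = edge_tail (es ! (i + 1)))
      \<and> edge_head (es ! (d - 1)) = edge_tail (es ! 0)}"

end

theory Submission
  imports Defs
begin


lemma finite_lists_sum_le: "finite {xs::nat list. length xs = k \<and> sum_list xs \<le> m}"
proof -
  have "{xs::nat list. length xs = k \<and> sum_list xs \<le> m} \<subseteq> {xs. set xs \<subseteq> {..m} \<and> length xs = k}"
    by (auto dest: member_le_sum_list)
  moreover have "finite {xs. set xs \<subseteq> {..m::nat} \<and> length xs = k}"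
    by (rule finite_lists_length_eq) auto
  ultimately show ?thesis by (rule finite_subset)
qed

lemma card_lists_sum_le: "card {xs::nat list. length xs = k \<and> sum_list xs \<le> m} = (m + k) choose k"
proof (induction k arbitrary: m)
  case 0
  have "{xs::nat list. length xs = 0 \<and> sum_list xs \<le> m} = {[]}" by auto
  then show ?case by simp
next
  case (Suc k)
  have eq: "{xs::nat list. length xs = Suc k \<and> sum_list xs \<le> m} =
     (\<Union>x\<in>{..m}. (#) x ` {ys. length ys = k \<and> sum_list ys \<le> m - x})"
  proof (rule set_eqI, rule iffI)
    fix xs assume "xs \<in> {xs::nat list. length xs = Suc k \<and> sum_list xs \<le> m}"
    then obtain x ys where "xs = x # ys" "length ys = k" "x + sum_list ys \<le> m"
      by (cases xs) auto
    then show "xs \<in> (\<Union>x\<in>{..m}. (#) x ` {ys. length ys = k \<and> sum_list ys \<le> m - x})"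
      by (intro UN_I[of x]) auto
  qed auto
  have "card {xs::nat list. length xs = Suc k \<and> sum_list xs \<le> m} =
     (\<Sum>x\<le>m. card ((#) x ` {ys::nat list. length ys = k \<and> sum_list ys \<le> m - x}))"
    unfolding eq
    by (rule card_UN_disjoint) (auto intro: finite_lists_sum_le)
  also have "\<dots> = (\<Sum>x\<le>m. (m - x + k) choose k)"
    by (rule sum.cong) (auto simp: card_image Suc.IH)
  also have "\<dots> = (\<Sum>x\<le>m. (x + k) choose k)"
    by (rule sum.reindex_bij_witness[where i="\<lambda>x. m - x" and j="\<lambda>x. m - x"]) auto
  also have "\<dots> = (\<Sum>x\<le>m. (k + x) choose x)"
    by (rule sum.cong) (use binomial_symmetric[of k "x + k" for x] in \<open>auto simp: add.commute\<close>)
  also have "\<dots> = Suc (k + m) choose m" by (rule sum_choose_lower)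
  also have "\<dots> = (m + Suc k) choose Suc k"
    using binomial_symmetric[of m "Suc (k+m)"] by (simp add: add.commute)
  finally show ?case .
qed




lemma std_nth_idx:
  assumes "distinct xs" "i < length xs"
  shows "standardize xs ! i = card {j. j < length xs \<and> xs!j \<le> xs!i}"
proof -
  have "{y \<in> set xs. y \<le> xs!i} = (nth xs) ` {j. j < length xs \<and> xs!j \<le> xs!i}"
    by (auto simp: in_set_conv_nth)
  moreover have "inj_on (nth xs) {j. j < length xs \<and> xs!j \<le> xs!i}"
    using assms(1) by (auto simp: inj_on_def nth_eq_iff_index_eq)
  ultimately have "card {y \<in> set xs. y \<le> xs!i} = card {j. j < length xs \<and> xs!j \<le> xs!i}"
    by (simp add: card_image)
  thus ?thesis using assms by (simp add: standardize_def)
qed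

lemma std_length[simp]: "length (standardize xs) = length xs"
  by (simp add: standardize_def)

lemma std_less_iff:
  assumes "distinct xs" "i < length xs" "j < length xs"
  shows "standardize xs ! i < standardize xs ! j \<longleftrightarrow> xs!i < xs!j"
proof -
  have fin: "finite {k. k < length xs \<and> xs!k \<le> xs!v}" for v by simp
  show ?thesis
  proof
    assume lt: "xs!i < xs!j"
    have sub: "{k. k < length xs \<and> xs!k \<le> xs!i} \<subseteq> {k. k < length xs \<and> xs!k \<le> xs!j}"
      using lt by auto
    have "j \<in> {k. k < length xs \<and> xs!k \<le> xs!j}" using assms by simp
    moreover have "j \<notin> {k. k < length xs \<and> xs!k \<le> xs!i}" using lt by simp
    ultimately have "{k. k < length xs \<and> xs!k \<le> xs!i} \<subset> {k. k < length xs \<and> xs!k \<le> xs!j}"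
      using sub by blast
    hence "card {k. k < length xs \<and> xs!k \<le> xs!i} < card {k. k < length xs \<and> xs!k \<le> xs!j}"
      by (rule psubset_card_mono[OF fin])
    thus "standardize xs ! i < standardize xs ! j" using assms by (simp add: std_nth_idx)
  next
    assume a: "standardize xs ! i < standardize xs ! j"
    show "xs!i < xs!j"
    proof (rule ccontr)
      assume "\<not> xs!i < xs!j"
      hence "xs!j \<le> xs!i" by simp
      hence "{k. k < length xs \<and> xs!k \<le> xs!j} \<subseteq> {k. k < length xs \<and> xs!k \<le> xs!i}"
        by auto
      hence "card {k. k < length xs \<and> xs!k \<le> xs!j} \<le> card {k. k < length xs \<and> xs!k \<le> xs!i}"
        by (rule card_mono[OF fin])
      thus False using a assms by (simp add: std_nth_idx)
    qed
  qed
qed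

lemma std_pattern_eq:
  assumes "distinct xs" "distinct ys" "length xs = length ys"
    and pat: "\<And>i j. i < length xs \<Longrightarrow> j < length xs \<Longrightarrow> xs!i < xs!j \<longleftrightarrow> ys!i < ys!j"
  shows "standardize xs = standardize ys"
proof (rule nth_equalityI)
  show "length (standardize xs) = length (standardize ys)" using assms by simp
  fix i assume "i < length (standardize xs)"
  hence i: "i < length xs" by simp
  have "xs!j \<le> xs!i \<longleftrightarrow> ys!j \<le> ys!i" if "j < length xs" for j
    using pat[OF i that] by (simp add: not_less[symmetric])
  hence "{j. j < length xs \<and> xs!j \<le> xs!i} = {j. j < length ys \<and> ys!j \<le> ys!i}"
    using assms(3) by auto
  thus "standardize xs ! i = standardize ys ! i"
    using std_nth_idx[OF assms(1) i] std_nth_idx[OF assms(2)] i assms(3) by simp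
qed

lemma perms_D:
  assumes "p \<in> perms m"
  shows "length p = m" "distinct p" "set p = {1..m}"
  using assms by (auto simp: perms_def)

lemma std_perm:
  assumes "p \<in> perms m"
  shows "standardize p = p"
proof (rule nth_equalityI)
  show "length (standardize p) = length p" by simp
  fix i assume "i < length (standardize p)"
  hence i: "i < length p" by simp
  have pi: "p!i \<in> {1..m}" using perms_D[OF assms] i nth_mem by blast
  have "{y \<in> set p. y \<le> p!i} = {1..p!i}" using perms_D(3)[OF assms] pi by auto
  thus "standardize p ! i = p ! i" using i by (simp add: standardize_def)
qed

lemma perm_pattern_eq:
  assumes "xs \<in> perms m" "ys \<in> perms m"
    and pat: "\<And>i j. i < m \<Longrightarrow> j < m \<Longrightarrow> xs!i < xs!j \<longleftrightarrow> ys!i < ys!j"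
  shows "xs = ys"
proof -
  have "standardize xs = standardize ys"
    by (rule std_pattern_eq) (use perms_D[OF assms(1)] perms_D[OF assms(2)] pat in auto)
  thus ?thesis using std_perm[OF assms(1)] std_perm[OF assms(2)] by simp
qed

lemma downclosed_interval:
  assumes sub: "S \<subseteq> {1..(n::nat)}"
    and dc: "\<And>j j'. j \<in> S \<Longrightarrow> 1 \<le> j' \<Longrightarrow> j' < j \<Longrightarrow> j' \<in> S"
  shows "S = {1..card S}"
proof (cases "S = {}")
  case True thus ?thesis by simp
next
  case False
  have fin: "finite S" using sub finite_subset by blast
  define M where "M = Max S"
  have MS: "M \<in> S" using Max_in[OF fin False] by (simp add: M_def)
  have "S = {1..M}"
  proof
    show "S \<subseteq> {1..M}" using sub Max_ge[OF fin] by (auto simp: M_def)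
    show "{1..M} \<subseteq> S"
    proof
      fix x assume "x \<in> {1..M}"
      thus "x \<in> S" using dc[OF MS] MS by (cases "x = M") auto
    qed
  qed
  thus ?thesis by simp
qed




definition Rv :: "nat \<Rightarrow> nat \<Rightarrow> nat list \<Rightarrow> bool" where
  "Rv n d rs \<longleftrightarrow> (\<forall>b j. 1 \<le> j \<longrightarrow> j \<le> rs!(b mod d) \<longrightarrow> rs!(b mod d) < n \<longrightarrow> j \<le> b \<longrightarrow>
      rs!((b-j) mod d) + j \<le> rs!(b mod d))"

definition Rset :: "nat \<Rightarrow> nat \<Rightarrow> nat list set" where
  "Rset n d = {rs. length rs = d \<and> (\<forall>x\<in>set rs. x \<le> n) \<and> Rv n d rs}"

definition phi :: "nat \<Rightarrow> nat list \<Rightarrow> nat list" where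
  "phi d rs = map (\<lambda>k. if rs!k = 0 then 1 + card {t\<in>{1..<d}. rs!((k+t) mod d) = t} else 0) [0..<d]"

definition Uset :: "nat \<Rightarrow> nat list set" where
  "Uset d = {us. length us = d \<and> sum_list us \<le> d}"

lemma mod_add_cancel_lt:
  assumes "(k + t) mod d = (k' + t) mod (d::nat)" "k < d" "k' < d"
  shows "k = k'"
proof (cases "k \<le> k'")
  case True
  then obtain s where "k' + t = k + t + d * s" using mod_eq_nat2E[OF assms(1)] by auto
  hence "k' = k + d * s" by simp
  with assms show ?thesis by (cases s) auto
next
  case False
  then obtain s where "k + t = k' + t + d * s" using mod_eq_nat1E[OF assms(1)] by auto
  hence "k = k' + d * s" by simp
  with assms show ?thesis by (cases s) auto
qed

lemma Rv_D:
  assumes "Rv n d rs" "1 \<le> j" "j \<le> rs!(b mod d)" "rs!(b mod d) < n" "j \<le> b"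
  shows "rs!((b-j) mod d) + j \<le> rs!(b mod d)"
  using assms unfolding Rv_def by blast

lemma R_lt_d:
  assumes "Rv n d rs" "rs!(b mod d) < n" "1 \<le> d"
  shows "rs!(b mod d) < d"
proof (rule ccontr)
  assume "\<not> rs!(b mod d) < d"
  hence h: "d \<le> rs!((b+d) mod d)" by simp
  have "rs!((b+d) mod d) < n" using assms(2) by simp
  from Rv_D[OF assms(1) _ h this] assms(3)
  have "rs!((b+d-d) mod d) + d \<le> rs!((b+d) mod d)" by simp
  thus False using assms(3) by simp
qed

lemma phi_length[simp]: "length (phi d rs) = d" by (simp add: phi_def)

lemma phi_nth: "k < d \<Longrightarrow> phi d rs ! k =
   (if rs!k = 0 then 1 + card {t\<in>{1..<d}. rs!((k+t) mod d) = t} else 0)"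
  by (simp add: phi_def)

lemma phi_in_U:
  assumes "rs \<in> Rset n d" "1 \<le> d" "d \<le> n"
  shows "phi d rs \<in> Uset d"
proof -
  have len: "length rs = d" using assms(1) by (simp add: Rset_def)
  define Z where "Z = {k\<in>{..<d}. rs!k = 0}"
  define A where "A k = {t\<in>{1..<d}. rs!((k+t) mod d) = t}" for k
  have fin: "finite (A k)" for k by (simp add: A_def)
  have "sum_list (phi d rs) = (\<Sum>k<d. phi d rs ! k)"
    by (simp add: sum_list_sum_nth atLeast0LessThan)
  also have "\<dots> = (\<Sum>k<d. if rs!k = 0 then 1 + card (A k) else 0)"
    by (rule sum.cong) (auto simp: phi_nth A_def)
  also have "\<dots> = (\<Sum>k\<in>Z. 1 + card (A k))"
    unfolding Z_def by (simp add: sum.If_cases Int_def)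
  also have "\<dots> = card Z + (\<Sum>k\<in>Z. card (A k))"
    by (simp add: sum_Suc)
  also have "(\<Sum>k\<in>Z. card (A k)) = card (SIGMA k:Z. A k)"
    by (rule card_SigmaI[symmetric]) (auto simp: Z_def fin)
  also have "card (SIGMA k:Z. A k) \<le> card ({..<d} - Z)"
  proof (rule card_inj_on_le)
    show "inj_on (\<lambda>(k,t). (k+t) mod d) (SIGMA k:Z. A k)"
    proof (rule inj_onI, clarify)
      fix k t k' t'
      assume a: "k \<in> Z" "t \<in> A k" "k' \<in> Z" "t' \<in> A k'" "(k+t) mod d = (k'+t') mod d"
      have "t = t'" using a by (auto simp: A_def)
      with a have "(k+t) mod d = (k'+t) mod d" by simp
      hence "k = k'" using a by (intro mod_add_cancel_lt[of k t d k']) (auto simp: Z_def)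
      thus "k = k' \<and> t = t'" using \<open>t = t'\<close> by simp
    qed
    show "(\<lambda>(k,t). (k+t) mod d) ` (SIGMA k:Z. A k) \<subseteq> {..<d} - Z"
      using assms(2) by (auto simp: A_def Z_def)
    show "finite ({..<d} - Z)" by simp
  qed
  finally have "sum_list (phi d rs) \<le> card Z + card ({..<d} - Z)" by simp
  also have "\<dots> = d"
  proof -
    have sub: "Z \<subseteq> {..<d}" by (auto simp: Z_def)
    have fz: "finite Z" using sub finite_subset by blast
    have "card ({..<d} - Z) = d - card Z" using card_Diff_subset[OF fz sub] by simp
    moreover have "card Z \<le> d" using card_mono[of "{..<d}" Z] sub by simp
    ultimately show ?thesis by simp
  qed
  finally show ?thesis by (simp add: Uset_def)
qed

lemma Rset_D:
  assumes "rs \<in> Rset n d" "1 \<le> d"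
  shows "length rs = d" "rs!(b mod d) \<le> n" "Rv n d rs"
  using assms by (auto simp: Rset_def)

lemma inj_core:
  assumes rs: "rs \<in> Rset n d" and rs': "rs' \<in> Rset n d" and ph: "phi d rs = phi d rs'"
    and d: "1 \<le> d" "d \<le> n"
    and min_a: "\<forall>b. rs!(b mod d) \<noteq> rs'!(b mod d) \<longrightarrow> a \<le> min (rs!(b mod d)) (rs'!(b mod d))"
    and la: "rs!(l mod d) = a" and la': "a < rs'!(l mod d)" and ld: "d \<le> l"
  shows False
proof -
  have lmd: "l mod d < d" using d by simp
  have an: "a < n" using la' Rset_D(2)[OF rs' d(1), of l] by simp
  have ad: "a < d" using R_lt_d[OF Rset_D(3)[OF rs d(1)], of l] an la d by simp
  show False
  proof (cases "a = 0")
    case True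
    have "phi d rs ! (l mod d) \<noteq> 0" using la True lmd by (simp add: phi_nth)
    moreover have "phi d rs' ! (l mod d) = 0" using la' True lmd by (simp add: phi_nth)
    ultimately show False using ph by simp
  next
    case False
    hence a1: "1 \<le> a" by simp
    define k where "k = l - a"
    have lk: "l = k + a" using ad ld by (simp add: k_def)
    have key: "rs!(m mod d) + (l - m) \<le> a" if "k \<le> m" "m < l" for m
    proof -
      have "rs!((l - (l-m)) mod d) + (l - m) \<le> rs!(l mod d)"
        by (rule Rv_D[OF Rset_D(3)[OF rs d(1)]]) (use that lk la an in auto)
      thus ?thesis using that la by simp
    qed
    have agree: "rs'!(m mod d) = rs!(m mod d)" if "k \<le> m" "m < l" for m
    proof (rule ccontr)
      assume "rs'!(m mod d) \<noteq> rs!(m mod d)"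
      hence "a \<le> rs!(m mod d)" using min_a by force
      moreover have "rs!(m mod d) < a" using key[OF that] that by simp
      ultimately show False by simp
    qed
    have k0: "rs!(k mod d) = 0" using key[of k] lk a1 by simp
    have k0': "rs'!(k mod d) = 0" using agree[of k] k0 lk a1 by simp
    define A where "A = {t\<in>{1..<d}. rs!((k+t) mod d) = t}"
    define A' where "A' = {t\<in>{1..<d}. rs'!((k+t) mod d) = t}"
    have "phi d rs ! (k mod d) = 1 + card A"
      using k0 d by (simp add: phi_nth A_def mod_add_left_eq)
    moreover have "phi d rs' ! (k mod d) = 1 + card A'"
      using k0' d by (simp add: phi_nth A'_def mod_add_left_eq)
    ultimately have cardeq: "card A = card A'" using ph by simp
    have "\<exists>t\<in>A'. a < t"
    proof (rule ccontr)
      assume "\<not> (\<exists>t\<in>A'. a < t)"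
      hence "A' \<subseteq> A - {a}"
      proof (intro subsetI)
        fix t assume t: "t \<in> A'" "\<not> (\<exists>t\<in>A'. a < t)"
        hence ta: "t \<le> a" by (meson not_le_imp_less)
        have "t \<noteq> a" using t la' lk by (auto simp: A'_def)
        hence "t < a" using ta by simp
        hence "rs'!((k+t) mod d) = rs!((k+t) mod d)" using agree[of "k+t"] lk by simp
        thus "t \<in> A - {a}" using t \<open>t < a\<close> by (auto simp: A_def A'_def)
      qed
      moreover have "a \<in> A" using la lk a1 ad by (simp add: A_def)
      ultimately have "card A' < card A"
        by (intro psubset_card_mono) (auto simp: A_def)
      thus False using cardeq by simp
    qed
    then obtain t where t: "t \<in> A'" "a < t" by blast
    have tR: "rs'!((k+t) mod d) = t" "t < d" using t by (auto simp: A'_def)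
    have "rs'!((k + t - (t - a)) mod d) + (t - a) \<le> rs'!((k+t) mod d)"
      by (rule Rv_D[OF Rset_D(3)[OF rs' d(1)]]) (use tR t d in auto)
    hence "rs'!(l mod d) \<le> a" using tR t lk by simp
    thus False using la' by simp
  qed
qed

lemma phi_inj:
  assumes d: "1 \<le> d" "d \<le> n"
  shows "inj_on (phi d) (Rset n d)"
proof (rule inj_onI, rule ccontr)
  fix rs rs' assume rs: "rs \<in> Rset n d" and rs': "rs' \<in> Rset n d"
    and ph: "phi d rs = phi d rs'" and ne: "rs \<noteq> rs'"
  have len: "length rs = d" "length rs' = d" using rs rs' by (auto simp: Rset_def)
  obtain b where b: "b < d" "rs!b \<noteq> rs'!b"
    using ne len nth_equalityI by metis
  define P where "P a \<longleftrightarrow> (\<exists>b. rs!(b mod d) \<noteq> rs'!(b mod d) \<and> a = min (rs!(b mod d)) (rs'!(b mod d)))" for a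
  have "P (min (rs!(b mod d)) (rs'!(b mod d)))" using b unfolding P_def by (intro exI[of _ b]) simp
  hence Pa: "P (LEAST a. P a)" by (rule LeastI)
  then obtain b0 where b0: "rs!(b0 mod d) \<noteq> rs'!(b0 mod d)"
    "(LEAST a. P a) = min (rs!(b0 mod d)) (rs'!(b0 mod d))" unfolding P_def by blast
  have mina: "\<forall>b. rs!(b mod d) \<noteq> rs'!(b mod d) \<longrightarrow> (LEAST a. P a) \<le> min (rs!(b mod d)) (rs'!(b mod d))"
  proof (intro allI impI)
    fix b assume "rs!(b mod d) \<noteq> rs'!(b mod d)"
    hence "P (min (rs!(b mod d)) (rs'!(b mod d)))" unfolding P_def by (intro exI[of _ b]) simp
    thus "(LEAST a. P a) \<le> min (rs!(b mod d)) (rs'!(b mod d))" by (rule Least_le)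
  qed
  define l where "l = b0 + d"
  have lm: "l mod d = b0 mod d" by (simp add: l_def)
  have ld: "d \<le> l" by (simp add: l_def)
  show False
  proof (cases "rs!(l mod d) < rs'!(l mod d)")
    case True
    show False
      by (rule inj_core[OF rs rs' ph d mina, of l]) (use True b0 lm ld in auto)
  next
    case False
    hence lt: "rs'!(l mod d) < rs!(l mod d)" using b0 lm by simp
    have mina': "\<forall>b. rs'!(b mod d) \<noteq> rs!(b mod d) \<longrightarrow> (LEAST a. P a) \<le> min (rs'!(b mod d)) (rs!(b mod d))"
      using mina by (metis min.commute)
    show False
      by (rule inj_core[OF rs' rs ph[symmetric] d mina', of l]) (use lt b0 lm ld in auto)
  qed
qed




definition Gf :: "nat \<Rightarrow> nat list \<Rightarrow> nat \<Rightarrow> int" where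
  "Gf d u i = (\<Sum>s\<in>{1..i}. int (u!(s mod d))) - int i"

definition Qf :: "nat \<Rightarrow> nat list \<Rightarrow> nat \<Rightarrow> nat \<Rightarrow> bool" where
  "Qf d u b j \<longleftrightarrow> 1 \<le> j \<and> j \<le> d \<and> Gf d u (b - j) \<le> Gf d u b"

definition Rg :: "nat \<Rightarrow> nat \<Rightarrow> nat list \<Rightarrow> nat \<Rightarrow> nat" where
  "Rg n d u b = (if \<exists>j. Qf d u b j then (LEAST j. Qf d u b j) - 1 else n)"

definition psi :: "nat \<Rightarrow> nat \<Rightarrow> nat list \<Rightarrow> nat list" where
  "psi n d u = map (\<lambda>l. Rg n d u (l + d)) [0..<d]"

lemma G_Suc: "Gf d u (Suc i) = Gf d u i + int (u!(Suc i mod d)) - 1"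
  by (simp add: Gf_def)

lemma G_base:
  assumes "length u = d" "1 \<le> d"
  shows "Gf d u d = int (sum_list u) - int d"
proof -
  have "(\<Sum>s\<in>{1..d}. int (u!(s mod d))) = (\<Sum>s\<in>{..<d}. int (u!s))"
    by (rule sum.reindex_bij_witness[where i="\<lambda>b. if b = 0 then d else b" and j="\<lambda>s. s mod d"])
      (use assms(2) in \<open>auto simp: le_less\<close>)
  also have "\<dots> = int (sum_list u)"
    using assms(1) by (simp add: sum_list_sum_nth atLeast0LessThan)
  finally show ?thesis by (simp add: Gf_def)
qed

lemma G_per:
  assumes "length u = d" "1 \<le> d"
  shows "Gf d u (i + d) = Gf d u i + (int (sum_list u) - int d)"
proof (induction i)
  case 0
  then show ?case using G_base[OF assms] by (simp add: Gf_def)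
next
  case (Suc i)
  have "Gf d u (Suc i + d) = Gf d u (i + d) + int (u!(Suc (i + d) mod d)) - 1"
    using G_Suc[of d u "i+d"] by simp
  also have "Suc (i + d) mod d = Suc i mod d" by (metis add_Suc mod_add_self2)
  finally show ?case using Suc G_Suc[of d u i] by simp
qed

lemma G_down: "Gf d u i - 1 \<le> Gf d u (Suc i)"
  by (simp add: G_Suc)

lemma Qf_shift:
  assumes "length u = d" "1 \<le> d" "d \<le> b"
  shows "Qf d u (b + d) j = Qf d u b j"
proof (cases "1 \<le> j \<and> j \<le> d")
  case True
  have e: "b + d - j = (b - j) + d" using assms True by simp
  have "Gf d u (b + d - j) = Gf d u (b - j) + (int (sum_list u) - int d)"
    unfolding e by (rule G_per[OF assms(1,2)])
  moreover have "Gf d u (b + d) = Gf d u b + (int (sum_list u) - int d)"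
    by (rule G_per[OF assms(1,2)])
  ultimately show ?thesis unfolding Qf_def by simp
next
  case False
  thus ?thesis unfolding Qf_def by blast
qed

lemma Rg_per:
  assumes "length u = d" "1 \<le> d" "d \<le> b"
  shows "Rg n d u (b + d) = Rg n d u b"
proof -
  have "Qf d u (b + d) = Qf d u b" using Qf_shift[OF assms] by auto
  thus ?thesis by (simp add: Rg_def)
qed

lemma Rg_per_mult:
  assumes "length u = d" "1 \<le> d" "d \<le> b"
  shows "Rg n d u (b + d * q) = Rg n d u b"
proof (induction q)
  case (Suc q)
  have "Rg n d u (b + d * Suc q) = Rg n d u ((b + d * q) + d)" by (simp add: algebra_simps)
  also have "\<dots> = Rg n d u (b + d * q)" by (rule Rg_per[OF assms(1,2)]) (use assms(3) in simp)
  finally show ?case using Suc by simp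
qed simp

lemma Rg_mod:
  assumes "length u = d" "1 \<le> d"
  shows "Rg n d u (x mod d + d) = Rg n d u (x + d)"
proof -
  have "x + d = (x mod d + d) + d * (x div d)" by simp
  thus ?thesis using Rg_per_mult[OF assms, of "x mod d + d" n "x div d"] by simp
qed

lemma psi_length[simp]: "length (psi n d u) = d" by (simp add: psi_def)

lemma psi_R:
  assumes "length u = d" "1 \<le> d"
  shows "psi n d u ! (x mod d) = Rg n d u (x + d)"
  using assms Rg_mod[OF assms] by (simp add: psi_def)

lemma Least_Qf:
  assumes "\<exists>j. Qf d u b j"
  shows "Qf d u b (LEAST j. Qf d u b j)" "1 \<le> (LEAST j. Qf d u b j)" "(LEAST j. Qf d u b j) \<le> d"
  using LeastI_ex[OF assms] by (auto simp: Qf_def)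

lemma Rg_le_n:
  assumes "d \<le> n"
  shows "Rg n d u b \<le> n"
proof (cases "\<exists>j. Qf d u b j")
  case True
  hence "(LEAST j. Qf d u b j) \<le> d" by (rule Least_Qf(3))
  thus ?thesis using True assms by (simp add: Rg_def)
next
  case False
  thus ?thesis by (simp add: Rg_def)
qed

lemma Rg_lt_n_found:
  assumes "Rg n d u b < n"
  shows "\<exists>j. Qf d u b j"
  using assms by (auto simp: Rg_def split: if_splits)

lemma psi_in_Rset:
  assumes u: "length u = d" and d: "1 \<le> d" "d \<le> n"
  shows "psi n d u \<in> Rset n d"
proof -
  have ent: "\<forall>x\<in>set (psi n d u). x \<le> n"
    using Rg_le_n[OF d(2)] by (auto simp: psi_def)
  have "Rv n d (psi n d u)"
    unfolding Rv_def
  proof (intro allI impI)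
    fix b j
    assume j1: "1 \<le> j" and jr: "j \<le> psi n d u ! (b mod d)" and rn: "psi n d u ! (b mod d) < n"
      and jb: "j \<le> b"
    define B where "B = b + d"
    have RB: "psi n d u ! (b mod d) = Rg n d u B" unfolding B_def by (rule psi_R[OF u d(1)])
    have "B - j = (b - j) + d" using jb by (simp add: B_def)
    hence RBj: "psi n d u ! ((b - j) mod d) = Rg n d u (B - j)"
      using psi_R[OF u d(1), where x="b - j" and n=n] by simp
    have ex: "\<exists>j. Qf d u B j" by (rule Rg_lt_n_found[where n=n]) (use rn RB in simp)
    define J where "J = (LEAST j. Qf d u B j)"
    have QJ: "Qf d u B J" "1 \<le> J" "J \<le> d" using Least_Qf[OF ex] by (auto simp: J_def)
    have RBJ: "Rg n d u B = J - 1" using ex by (simp add: Rg_def J_def)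
    have jJ: "j < J" using jr RB RBJ QJ by simp
    have notQ: "\<not> Qf d u B j" by (rule not_less_Least) (use jJ in \<open>simp add: J_def\<close>)
    hence Gj: "Gf d u B < Gf d u (B - j)" using j1 jJ QJ by (auto simp: Qf_def)
    have Bd: "d \<le> B" by (simp add: B_def)
    have "Qf d u (B - j) (J - j)"
      unfolding Qf_def
    proof (intro conjI)
      show "1 \<le> J - j" using jJ by simp
      show "J - j \<le> d" using QJ by simp
      have "B - j - (J - j) = B - J" using jJ QJ Bd by simp
      thus "Gf d u (B - j - (J - j)) \<le> Gf d u (B - j)" using QJ(1) Gj by (simp add: Qf_def)
    qed
    hence ex2: "\<exists>i. Qf d u (B - j) i" by blast
    have "(LEAST i. Qf d u (B - j) i) \<le> J - j" using \<open>Qf d u (B - j) (J - j)\<close> by (rule Least_le)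
    hence "Rg n d u (B - j) \<le> J - j - 1" using ex2 by (simp add: Rg_def)
    thus "psi n d u ! ((b - j) mod d) + j \<le> psi n d u ! (b mod d)"
      using RBj RB RBJ jJ by simp
  qed
  thus ?thesis using ent by (simp add: Rset_def)
qed

lemma Rg0_iff:
  assumes u: "length u = d" and d: "1 \<le> d" "d \<le> n" and k: "k < d"
  shows "Rg n d u (k + d) = 0 \<longleftrightarrow> 1 \<le> u!k"
proof -
  define K where "K = k + d"
  have KS: "K = Suc (K - 1)" using d by (simp add: K_def)
  have Km: "K mod d = k" using k by (simp add: K_def)
  have GK: "Gf d u K = Gf d u (K - 1) + int (u!k) - 1"
    using G_Suc[of d u "K - 1"] KS Km by simp
  have Q1: "Qf d u K 1 \<longleftrightarrow> 1 \<le> u!k" using GK d by (auto simp: Qf_def)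
  show ?thesis
  proof
    assume R0: "Rg n d u (k + d) = 0"
    hence ex: "\<exists>j. Qf d u K j" using d by (auto simp: Rg_def K_def split: if_splits)
    hence "(LEAST j. Qf d u K j) = 1" using R0 Least_Qf(2)[OF ex] by (simp add: Rg_def K_def)
    hence "Qf d u K 1" using Least_Qf(1)[OF ex] by simp
    thus "1 \<le> u!k" using Q1 by simp
  next
    assume "1 \<le> u!k"
    hence q: "Qf d u K 1" using Q1 by simp
    hence "(LEAST j. Qf d u K j) \<le> 1" by (rule Least_le)
    thus "Rg n d u (k + d) = 0" using q by (auto simp: Rg_def K_def)
  qed
qed

lemma Rgt_iff:
  assumes u: "length u = d" and d: "1 \<le> d" "d \<le> n" and K: "1 \<le> K" and t: "1 \<le> t" "t < d"
  shows "Rg n d u (K + t) = t \<longleftrightarrow>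
     (Gf d u (K - 1) \<le> Gf d u (K + t) \<and> (\<forall>m. K \<le> m \<and> m < K + t \<longrightarrow> Gf d u (K + t) < Gf d u m))"
proof
  assume R: "Rg n d u (K + t) = t"
  have ex: "\<exists>j. Qf d u (K + t) j" using R t d by (auto simp: Rg_def split: if_splits)
  have L: "(LEAST j. Qf d u (K + t) j) = t + 1" using R ex Least_Qf(2)[OF ex] by (simp add: Rg_def)
  have "Qf d u (K + t) (t + 1)" using Least_Qf(1)[OF ex] L by simp
  hence g1: "Gf d u (K - 1) \<le> Gf d u (K + t)" using K by (simp add: Qf_def)
  have "Gf d u (K + t) < Gf d u m" if "K \<le> m" "m < K + t" for m
  proof -
    define j where "j = K + t - m"
    have "j < (LEAST j. Qf d u (K + t) j)" using L that by (simp add: j_def)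
    hence "\<not> Qf d u (K + t) j" by (rule not_less_Least)
    moreover have "1 \<le> j" "j \<le> d" using that t by (auto simp: j_def)
    moreover have "K + t - j = m" using that by (simp add: j_def)
    ultimately show ?thesis by (auto simp: Qf_def)
  qed
  thus "Gf d u (K - 1) \<le> Gf d u (K + t) \<and> (\<forall>m. K \<le> m \<and> m < K + t \<longrightarrow> Gf d u (K + t) < Gf d u m)"
    using g1 by blast
next
  assume H: "Gf d u (K - 1) \<le> Gf d u (K + t) \<and> (\<forall>m. K \<le> m \<and> m < K + t \<longrightarrow> Gf d u (K + t) < Gf d u m)"
  have q: "Qf d u (K + t) (t + 1)" using H t K by (simp add: Qf_def)
  have "(LEAST j. Qf d u (K + t) j) = t + 1"
  proof (rule Least_equality[where P="Qf d u (K + t)", OF q])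
    fix y assume y: "Qf d u (K + t) y"
    show "t + 1 \<le> y"
    proof (rule ccontr)
      assume "\<not> t + 1 \<le> y"
      hence "y \<le> t" by simp
      moreover have "1 \<le> y" using y by (simp add: Qf_def)
      ultimately have "Gf d u (K + t) < Gf d u (K + t - y)" using H by auto
      thus False using y by (simp add: Qf_def)
    qed
  qed
  thus "Rg n d u (K + t) = t" using q by (auto simp: Rg_def)
qed

lemma card_T:
  assumes u: "length u = d" "sum_list u \<le> d" and d: "1 \<le> d" "d \<le> n" and K: "1 \<le> K"
    and uk: "1 \<le> u!(K mod d)"
  shows "card {t\<in>{1..<d}. Gf d u (K - 1) \<le> Gf d u (K + t) \<and>
           (\<forall>m. K \<le> m \<and> m < K + t \<longrightarrow> Gf d u (K + t) < Gf d u m)} = u!(K mod d) - 1"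
proof -
  define T where "T = {t\<in>{1..<d}. Gf d u (K - 1) \<le> Gf d u (K + t) \<and>
           (\<forall>m. K \<le> m \<and> m < K + t \<longrightarrow> Gf d u (K + t) < Gf d u m)}"
  define G where "G = Gf d u"
  have KS: "K = Suc (K - 1)" using K by simp
  have GK: "G K = G (K - 1) + int (u!(K mod d)) - 1"
    using G_Suc[of d u "K - 1"] KS by (simp add: G_def)
  have bij: "bij_betw (\<lambda>t. G (K + t)) T {G (K - 1)..<G K}"
  proof (rule bij_betw_imageI)
    show "inj_on (\<lambda>t. G (K + t)) T"
    proof (rule inj_onI)
      fix t t' assume tt: "t \<in> T" "t' \<in> T" "G (K + t) = G (K + t')"
      show "t = t'"
      proof (rule linorder_cases[of t t'])
        assume "t < t'"
        from tt(2) have "\<forall>m. K \<le> m \<and> m < K + t' \<longrightarrow> G (K + t') < G m" by (simp add: T_def G_def)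
        hence "G (K + t') < G (K + t)" using \<open>t < t'\<close> by simp
        thus ?thesis using tt by simp
      next
        assume "t' < t"
        from tt(1) have "\<forall>m. K \<le> m \<and> m < K + t \<longrightarrow> G (K + t) < G m" by (simp add: T_def G_def)
        hence "G (K + t) < G (K + t')" using \<open>t' < t\<close> by simp
        thus ?thesis using tt by simp
      qed
    qed
    show "(\<lambda>t. G (K + t)) ` T = {G (K - 1)..<G K}"
    proof (rule set_eqI, rule iffI)
      fix v assume "v \<in> (\<lambda>t. G (K + t)) ` T"
      then obtain t where t: "t \<in> T" "v = G (K + t)" by blast
      from t(1) have "\<forall>m. K \<le> m \<and> m < K + t \<longrightarrow> G (K + t) < G m" by (simp add: T_def G_def)
      moreover have "1 \<le> t" using t(1) by (simp add: T_def)
      ultimately have "G (K + t) < G K" by simp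
      thus "v \<in> {G (K - 1)..<G K}" using t by (auto simp: T_def G_def)
    next
      fix v assume v: "v \<in> {G (K - 1)..<G K}"
      have d2: "2 \<le> d"
      proof (rule ccontr)
        assume "\<not> 2 \<le> d"
        hence "d = 1" using d by simp
        moreover have "u!(K mod d) \<le> sum_list u"
          using u d by (intro elem_le_sum_list) simp
        ultimately have "u!(K mod d) \<le> 1" using u by simp
        hence "G K \<le> G (K - 1)" using GK by simp
        thus False using v by simp
      qed
      define P where "P t \<longleftrightarrow> 1 \<le> t \<and> G (K + t) \<le> v" for t
      have Gper: "G (K - 1 + d) \<le> G (K - 1)"
        using G_per[OF u(1) d(1), of "K - 1"] u(2) by (simp add: G_def)
      have "P (d - 1)" using Gper d2 K v by (simp add: P_def)
      hence Pt0: "P (LEAST t. P t)" by (rule LeastI)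
      define t0 where "t0 = (LEAST t. P t)"
      have t0d: "t0 \<le> d - 1" using \<open>P (d - 1)\<close> by (simp add: t0_def Least_le)
      have above: "v < G m" if "K \<le> m" "m < K + t0" for m
      proof (cases "m = K")
        case True thus ?thesis using v by simp
      next
        case False
        hence lt: "m - K < t0" and ge1: "1 \<le> m - K" using that by auto
        have "\<not> P (m - K)" using lt unfolding t0_def by (rule not_less_Least)
        thus ?thesis using \<open>1 \<le> m - K\<close> that by (simp add: P_def not_le)
      qed
      have t01: "1 \<le> t0" using Pt0 by (simp add: P_def t0_def)
      have "v < G (K + t0 - 1)" using above[of "K + t0 - 1"] t01 by simp
      moreover have "G (K + t0 - 1) - 1 \<le> G (K + t0)"
        using G_down[of d u "K + t0 - 1"] t01 by (simp add: G_def)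
      moreover have "G (K + t0) \<le> v" using Pt0 by (simp add: P_def t0_def)
      ultimately have eqv: "G (K + t0) = v" by simp
      have "t0 \<in> T" unfolding T_def using t01 t0d d2 v eqv above by (auto simp: G_def)
      thus "v \<in> (\<lambda>t. G (K + t)) ` T" using eqv by force
    qed
  qed
  have "card T = card {G (K - 1)..<G K}" using bij by (rule bij_betw_same_card)
  also have "\<dots> = u!(K mod d) - 1" using GK uk by simp
  finally show ?thesis by (simp add: T_def)
qed

lemma phi_psi:
  assumes u: "length u = d" "sum_list u \<le> d" and d: "1 \<le> d" "d \<le> n"
  shows "phi d (psi n d u) = u"
proof (rule nth_equalityI)
  show "length (phi d (psi n d u)) = length u" using u by simp
  fix k assume "k < length (phi d (psi n d u))"
  hence k: "k < d" by simp
  have pk: "psi n d u ! k = Rg n d u (k + d)" using psi_R[OF u(1) d(1), where x=k and n=n] k by simp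
  have pkt: "psi n d u ! ((k + t) mod d) = Rg n d u ((k + d) + t)" for t
    using psi_R[OF u(1) d(1), where x="k + t" and n=n] by (simp add: add.commute add.left_commute)
  show "phi d (psi n d u) ! k = u ! k"
  proof (cases "1 \<le> u!k")
    case False
    thus ?thesis using k pk Rg0_iff[OF u(1) d k] by (simp add: phi_nth)
  next
    case True
    have Km: "(k + d) mod d = k" using k by simp
    have "{t\<in>{1..<d}. psi n d u ! ((k + t) mod d) = t} =
          {t\<in>{1..<d}. Gf d u (k + d - 1) \<le> Gf d u (k + d + t) \<and>
           (\<forall>m. k + d \<le> m \<and> m < k + d + t \<longrightarrow> Gf d u (k + d + t) < Gf d u m)}"
      using Rgt_iff[OF u(1) d, of "k + d"] d by (auto simp: pkt)
    moreover have "card \<dots> = u!k - 1"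
      using card_T[OF u d, of "k + d"] d True Km by simp
    ultimately show ?thesis using k pk Rg0_iff[OF u(1) d k] True by (simp add: phi_nth)
  qed
qed

lemma card_Rset_U:
  assumes d: "1 \<le> d" "d \<le> n"
  shows "card (Rset n d) = card (Uset d)"
proof -
  have "phi d ` Rset n d = Uset d"
  proof
    show "phi d ` Rset n d \<subseteq> Uset d" using phi_in_U d by blast
    show "Uset d \<subseteq> phi d ` Rset n d"
    proof
      fix u assume "u \<in> Uset d"
      hence u: "length u = d" "sum_list u \<le> d" by (auto simp: Uset_def)
      have "u = phi d (psi n d u)" using phi_psi[OF u d] by simp
      thus "u \<in> phi d ` Rset n d" using psi_in_Rset[OF u(1) d] by blast
    qed
  qed
  thus ?thesis using card_image[OF phi_inj[OF d]] by simp
qed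




lemma n_le_dn: "1 \<le> d \<Longrightarrow> (n::nat) \<le> d * n" by (cases d) auto

lemma cw_D:
  assumes "es \<in> closed_walks n d"
  shows "length es = d" "set es \<subseteq> Av312 (n + 1)"
    "\<And>i. i + 1 < d \<Longrightarrow> edge_head (es ! i) = edge_tail (es ! (i + 1))"
    "edge_head (es ! (d - 1)) = edge_tail (es ! 0)"
  using assms by (auto simp: closed_walks_def)

lemma cw_edge:
  assumes "es \<in> closed_walks n d" "1 \<le> d"
  shows "es ! (t mod d) \<in> perms (n+1)" "avoids312 (es ! (t mod d))"
proof -
  have "t mod d < length es" using cw_D(1)[OF assms(1)] assms(2) by simp
  hence "es ! (t mod d) \<in> Av312 (n+1)" using cw_D(2)[OF assms(1)] nth_mem by blast
  thus "es ! (t mod d) \<in> perms (n+1)" "avoids312 (es ! (t mod d))" by (auto simp: Av312_def)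
qed

lemma cw_link:
  assumes "es \<in> closed_walks n d" "1 \<le> d"
  shows "edge_head (es ! (t mod d)) = edge_tail (es ! (Suc t mod d))"
proof (cases "Suc (t mod d) < d")
  case True
  hence "Suc t mod d = t mod d + 1" by (simp add: mod_Suc)
  thus ?thesis using cw_D(3)[OF assms(1), of "t mod d"] True by simp
next
  case False
  hence e: "t mod d = d - 1" using assms(2)
    by (metis Suc_lessI diff_Suc_1 mod_less_divisor not_less0 le_neq_implies_less zero_less_one
        less_le_trans)
  hence "Suc t mod d = 0" using assms(2) by (simp add: mod_Suc)
  thus ?thesis using cw_D(4)[OF assms(1)] e by simp
qed

lemma cw_shift1:
  assumes "es \<in> closed_walks n d" "1 \<le> d" "p < n" "q < n"
  shows "es!(t mod d)!(Suc p) < es!(t mod d)!(Suc q) \<longleftrightarrow> es!(Suc t mod d)!p < es!(Suc t mod d)!q"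
proof -
  let ?A = "es!(t mod d)" and ?B = "es!(Suc t mod d)"
  have A: "length ?A = n + 1" "distinct ?A" using perms_D[OF cw_edge(1)[OF assms(1,2)]] by auto
  have B: "length ?B = n + 1" "distinct ?B" using perms_D[OF cw_edge(1)[OF assms(1,2)]] by auto
  have dA: "distinct (tl ?A)" using A by (simp add: distinct_tl)
  have dB: "distinct (butlast ?B)" using B by (simp add: distinct_butlast)
  have "?A!(Suc p) < ?A!(Suc q) \<longleftrightarrow> tl ?A ! p < tl ?A ! q" using A assms by (simp add: nth_tl)
  also have "\<dots> \<longleftrightarrow> standardize (tl ?A) ! p < standardize (tl ?A) ! q"
    using std_less_iff[OF dA] A assms by simp
  also have "standardize (tl ?A) = standardize (butlast ?B)"
    using cw_link[OF assms(1,2), of t] by (simp add: edge_head_def edge_tail_def)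
  also have "standardize (butlast ?B) ! p < standardize (butlast ?B) ! q \<longleftrightarrow> butlast ?B ! p < butlast ?B ! q"
    using std_less_iff[OF dB] B assms by simp
  also have "\<dots> \<longleftrightarrow> ?B ! p < ?B ! q" using B assms by (simp add: nth_butlast)
  finally show ?thesis .
qed

lemma cw_shift:
  assumes "es \<in> closed_walks n d" "1 \<le> d" "p + k \<le> n" "q + k \<le> n"
  shows "es!(t mod d)!(p + k) < es!(t mod d)!(q + k) \<longleftrightarrow> es!((t + k) mod d)!p < es!((t + k) mod d)!q"
  using assms(3,4)
proof (induction k arbitrary: t)
  case 0 thus ?case by simp
next
  case (Suc k)
  have "es!(t mod d)!(p + Suc k) < es!(t mod d)!(q + Suc k) \<longleftrightarrow>
        es!(Suc t mod d)!(p + k) < es!(Suc t mod d)!(q + k)"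
    using cw_shift1[OF assms(1,2), of "p + k" "q + k" t] Suc.prems by simp
  also have "\<dots> \<longleftrightarrow> es!((Suc t + k) mod d)!p < es!((Suc t + k) mod d)!q"
    using Suc.IH[of "Suc t"] Suc.prems by simp
  finally show ?case by simp
qed

definition Cnt :: "nat list list \<Rightarrow> nat \<Rightarrow> nat \<Rightarrow> nat \<Rightarrow> nat" where
  "Cnt es n d b = card {j\<in>{1..n}. es!((b-j) mod d)!j < es!((b-j) mod d)!0}"

definition rsw :: "nat \<Rightarrow> nat \<Rightarrow> nat list list \<Rightarrow> nat list" where
  "rsw n d es = map (\<lambda>l. Cnt es n d (l + d*n)) [0..<d]"

lemma Cnt_per:
  assumes "n \<le> b"
  shows "Cnt es n d (b + d) = Cnt es n d b"
proof -
  have "{j\<in>{1..n}. es!((b + d - j) mod d)!j < es!((b + d - j) mod d)!0} =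
        {j\<in>{1..n}. es!((b-j) mod d)!j < es!((b-j) mod d)!0}"
  proof (rule Collect_cong)
    fix j
    show "(j \<in> {1..n} \<and> es!((b + d - j) mod d)!j < es!((b + d - j) mod d)!0) =
          (j \<in> {1..n} \<and> es!((b-j) mod d)!j < es!((b-j) mod d)!0)"
    proof (cases "j \<in> {1..n}")
      case True
      hence "b + d - j = (b - j) + d" using assms by simp
      thus ?thesis by simp
    qed auto
  qed
  thus ?thesis by (simp add: Cnt_def)
qed

lemma Cnt_per_mult:
  assumes "n \<le> b"
  shows "Cnt es n d (b + d * k) = Cnt es n d b"
proof (induction k)
  case (Suc k)
  have "Cnt es n d (b + d * Suc k) = Cnt es n d ((b + d * k) + d)" by (simp add: algebra_simps)
  also have "\<dots> = Cnt es n d (b + d * k)" by (rule Cnt_per) (use assms in simp)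
  finally show ?case using Suc by simp
qed simp

lemma rsw_nth:
  assumes "1 \<le> d" "n \<le> b"
  shows "rsw n d es ! (b mod d) = Cnt es n d b"
proof -
  have "rsw n d es ! (b mod d) = Cnt es n d (b mod d + d * n)"
    using assms by (simp add: rsw_def mult.commute)
  also have "\<dots> = Cnt es n d ((b mod d + d * n) + d * (b div d))"
    by (rule Cnt_per_mult[symmetric]) (use n_le_dn[of d n] assms(1) in linarith)
  also have "(b mod d + d * n) + d * (b div d) = b + d * n" by simp
  also have "Cnt es n d (b + d * n) = Cnt es n d b" by (rule Cnt_per_mult) (use assms in simp)
  finally show ?thesis .
qed

lemma rsw_nth':
  assumes "1 \<le> d"
  shows "rsw n d es ! (b mod d) = Cnt es n d (b + d * n)"
proof -
  have "rsw n d es ! ((b + d*n) mod d) = Cnt es n d (b + d * n)"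
    by (rule rsw_nth[OF assms]) (use n_le_dn[of d n] assms in linarith)
  thus ?thesis by simp
qed

lemma cw_dist:
  assumes "es \<in> closed_walks n d" "1 \<le> d" "i \<le> n" "j \<le> n" "i \<noteq> j"
  shows "es!(t mod d)!i \<noteq> es!(t mod d)!j"
  using perms_D[OF cw_edge(1)[OF assms(1,2), of t]] assms(3-5) by (simp add: nth_eq_iff_index_eq)

lemma Cnt_interval:
  assumes cw: "es \<in> closed_walks n d" and d: "1 \<le> d" "d \<le> n" and b: "n \<le> b"
  shows "{j\<in>{1..n}. es!((b-j) mod d)!j < es!((b-j) mod d)!0} = {1..Cnt es n d b}"
  unfolding Cnt_def
proof (rule downclosed_interval)
  show "{j\<in>{1..n}. es!((b-j) mod d)!j < es!((b-j) mod d)!0} \<subseteq> {1..n}" by auto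
  fix j j'
  assume jS: "j \<in> {j\<in>{1..n}. es!((b-j) mod d)!j < es!((b-j) mod d)!0}" and j1: "1 \<le> j'" and jj: "j' < j"
  let ?W = "es!((b-j) mod d)"
  have jn: "1 \<le> j" "j \<le> n" and Wj: "?W!j < ?W!0" using jS by auto
  have e1: "(b - j) + (j - j') = b - j'" using jj jn b by simp
  have sh: "?W!(j' + (j - j')) < ?W!(0 + (j - j')) \<longleftrightarrow>
            es!((b - j + (j - j')) mod d)!j' < es!((b - j + (j - j')) mod d)!0"
    by (rule cw_shift[OF cw d(1)]) (use jj jn in auto)
  have "\<not> ?W!(j - j') < ?W!j"
  proof
    assume a: "?W!(j - j') < ?W!j"
    have "avoids312 ?W" by (rule cw_edge(2)[OF cw d(1)])
    moreover have "length ?W = n + 1" using perms_D[OF cw_edge(1)[OF cw d(1)]] by simp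
    moreover have "\<exists>i j k. i < j \<and> j < k \<and> k < length ?W \<and> ?W!j < ?W!k \<and> ?W!k < ?W!i"
      by (intro exI[of _ 0] exI[of _ "j - j'"] exI[of _ j]) (use a Wj jj j1 jn \<open>length ?W = n + 1\<close> in auto)
    ultimately show False unfolding avoids312_def by blast
  qed
  moreover have "?W!(j - j') \<noteq> ?W!j" by (rule cw_dist[OF cw d(1)]) (use jj jn j1 in auto)
  ultimately have "?W!j < ?W!(j - j')" by simp
  hence "es!((b - j') mod d)!j' < es!((b - j') mod d)!0" using sh e1 jj by simp
  thus "j' \<in> {j\<in>{1..n}. es!((b-j) mod d)!j < es!((b-j) mod d)!0}" using j1 jj jn by simp
qed

lemma key_walk:
  assumes cw: "es \<in> closed_walks n d" and d: "1 \<le> d" "d \<le> n" and pq: "p < q" "q \<le> n"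
  shows "es!(t mod d)!q < es!(t mod d)!p \<longleftrightarrow> q - p \<le> rsw n d es ! ((t + q) mod d)"
proof -
  have "es!(t mod d)!((q - p) + p) < es!(t mod d)!(0 + p) \<longleftrightarrow>
        es!((t + p) mod d)!(q - p) < es!((t + p) mod d)!0"
    by (rule cw_shift[OF cw d(1)]) (use pq in auto)
  hence s1: "es!(t mod d)!q < es!(t mod d)!p \<longleftrightarrow> es!((t + p) mod d)!(q - p) < es!((t + p) mod d)!0"
    using pq by simp
  define b where "b = t + q + d * n"
  have bn: "n \<le> b" using n_le_dn[OF d(1), of n] unfolding b_def by linarith
  have bj: "b - (q - p) = (t + p) + d * n" using pq by (simp add: b_def)
  have md: "(b - (q - p)) mod d = (t + p) mod d" unfolding bj by simp
  have m1: "(q - p) \<in> {j\<in>{1..n}. es!((b-j) mod d)!j < es!((b-j) mod d)!0} \<longleftrightarrow>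
        es!((t + p) mod d)!(q - p) < es!((t + p) mod d)!0"
    using pq md by auto
  have m2: "(q - p) \<in> {1..Cnt es n d b} \<longleftrightarrow> q - p \<le> Cnt es n d b" using pq by auto
  have m3: "Cnt es n d b = rsw n d es ! ((t + q) mod d)"
    using rsw_nth'[OF d(1), of n es "t + q"] by (simp add: b_def)
  have m4: "(q - p) \<in> {j\<in>{1..n}. es!((b-j) mod d)!j < es!((b-j) mod d)!0} \<longleftrightarrow>
            (q - p) \<in> {1..Cnt es n d b}"
    by (simp only: Cnt_interval[OF cw d bn])
  show ?thesis using s1 m1 m2 m3 m4 by simp
qed

lemma Cnt_le: "Cnt es n d b \<le> n"
proof -
  have "Cnt es n d b \<le> card {1..n}" unfolding Cnt_def by (rule card_mono) auto
  thus ?thesis by simp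
qed

lemma rsw_in_Rset:
  assumes cw: "es \<in> closed_walks n d" and d: "1 \<le> d" "d \<le> n"
  shows "rsw n d es \<in> Rset n d"
proof -
  have len: "length (rsw n d es) = d" by (simp add: rsw_def)
  have ent: "\<forall>x\<in>set (rsw n d es). x \<le> n" using Cnt_le by (auto simp: rsw_def)
  have "Rv n d (rsw n d es)"
    unfolding Rv_def
  proof (intro allI impI)
    fix b j
    assume j1: "1 \<le> j" and jr: "j \<le> rsw n d es ! (b mod d)" and rn: "rsw n d es ! (b mod d) < n"
      and jb: "j \<le> b"
    define r where "r = rsw n d es ! (b mod d)"
    define B where "B = b + d * n"
    have rB: "r + 1 \<le> B" using rn n_le_dn[OF d(1), of n] unfolding r_def B_def by linarith
    define t0 where "t0 = B - (r + 1)"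
    define i where "i = r + 1 - j"
    have jr': "j \<le> r" using jr by (simp add: r_def)
    have rn': "r < n" using rn by (simp add: r_def)
    show "rsw n d es ! ((b - j) mod d) + j \<le> rsw n d es ! (b mod d)"
    proof (rule ccontr)
      assume "\<not> rsw n d es ! ((b - j) mod d) + j \<le> rsw n d es ! (b mod d)"
      hence ci: "i \<le> rsw n d es ! ((b - j) mod d)" by (simp add: i_def r_def)
      have "t0 + (r + 1) = b + d * n" using rB unfolding t0_def B_def by linarith
      hence e1: "(t0 + (r + 1)) mod d = b mod d" by simp
      have e2: "(t0 + i) mod d = (b - j) mod d"
      proof -
        have "t0 + i = (b - j) + d * n" using rB jr' jb by (simp add: t0_def i_def B_def)
        thus ?thesis by simp
      qed
      have "es!(t0 mod d)!(r + 1) < es!(t0 mod d)!i \<longleftrightarrow> (r + 1) - i \<le> rsw n d es ! ((t0 + (r + 1)) mod d)"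
        by (rule key_walk[OF cw d]) (use j1 jr' rn' in \<open>auto simp: i_def\<close>)
      hence s1: "es!(t0 mod d)!(r + 1) < es!(t0 mod d)!i" using e1 jr' j1 by (simp add: i_def r_def)
      have "es!(t0 mod d)!i < es!(t0 mod d)!0 \<longleftrightarrow> i - 0 \<le> rsw n d es ! ((t0 + i) mod d)"
        by (rule key_walk[OF cw d]) (use j1 jr' rn' in \<open>auto simp: i_def\<close>)
      hence s2: "es!(t0 mod d)!i < es!(t0 mod d)!0" using e2 ci by simp
      have "es!(t0 mod d)!(r + 1) < es!(t0 mod d)!0 \<longleftrightarrow> (r + 1) - 0 \<le> rsw n d es ! ((t0 + (r + 1)) mod d)"
        by (rule key_walk[OF cw d]) (use rn' in auto)
      hence "\<not> es!(t0 mod d)!(r + 1) < es!(t0 mod d)!0" using e1 by (simp add: r_def)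
      thus False using s1 s2 by simp
    qed
  qed
  thus ?thesis using len ent by (simp add: Rset_def)
qed

lemma rsw_inj:
  assumes d: "1 \<le> d" "d \<le> n"
  shows "inj_on (rsw n d) (closed_walks n d)"
proof (rule inj_onI)
  fix es es' assume cw: "es \<in> closed_walks n d" and cw': "es' \<in> closed_walks n d"
    and eq: "rsw n d es = rsw n d es'"
  show "es = es'"
  proof (rule nth_equalityI)
    show "length es = length es'" using cw_D(1)[OF cw] cw_D(1)[OF cw'] by simp
    fix a assume "a < length es"
    hence a: "a < d" using cw_D(1)[OF cw] by simp
    hence am: "a mod d = a" by simp
    have P: "es!a \<in> perms (n+1)" "es'!a \<in> perms (n+1)"
      using cw_edge(1)[OF cw d(1), of a] cw_edge(1)[OF cw' d(1), of a] am by auto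
    show "es!a = es'!a"
    proof (rule perm_pattern_eq[OF P])
      fix i j assume ij: "i < n + 1" "j < n + 1"
      show "es!a!i < es!a!j \<longleftrightarrow> es'!a!i < es'!a!j"
      proof (rule linorder_cases[of i j])
        assume lt: "i < j"
        have k1: "es!(a mod d)!j < es!(a mod d)!i \<longleftrightarrow> j - i \<le> rsw n d es ! ((a + j) mod d)"
          by (rule key_walk[OF cw d]) (use lt ij in auto)
        have k2: "es'!(a mod d)!j < es'!(a mod d)!i \<longleftrightarrow> j - i \<le> rsw n d es' ! ((a + j) mod d)"
          by (rule key_walk[OF cw' d]) (use lt ij in auto)
        have n1: "es!(a mod d)!i \<noteq> es!(a mod d)!j" by (rule cw_dist[OF cw d(1)]) (use lt ij in auto)
        have n2: "es'!(a mod d)!i \<noteq> es'!(a mod d)!j" by (rule cw_dist[OF cw' d(1)]) (use lt ij in auto)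
        show ?thesis using k1 k2 n1 n2 eq am by (auto simp: not_less_iff_gr_or_eq)
      next
        assume "i = j" thus ?thesis by simp
      next
        assume lt: "j < i"
        have k1: "es!(a mod d)!i < es!(a mod d)!j \<longleftrightarrow> i - j \<le> rsw n d es ! ((a + i) mod d)"
          by (rule key_walk[OF cw d]) (use lt ij in auto)
        have k2: "es'!(a mod d)!i < es'!(a mod d)!j \<longleftrightarrow> i - j \<le> rsw n d es' ! ((a + i) mod d)"
          by (rule key_walk[OF cw' d]) (use lt ij in auto)
        show ?thesis using k1 k2 eq am by simp
      qed
    qed
  qed
qed




definition lessP :: "nat \<Rightarrow> nat list \<Rightarrow> nat \<Rightarrow> nat \<Rightarrow> bool" where
  "lessP d rs x y \<longleftrightarrow> (x < y \<and> \<not> (y - x \<le> rs!(y mod d))) \<or> (y < x \<and> x - y \<le> rs!(x mod d))"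

definition rk :: "nat \<Rightarrow> nat \<Rightarrow> nat list \<Rightarrow> nat \<Rightarrow> nat \<Rightarrow> nat" where
  "rk n d rs a p = Suc (card {q. q \<le> n \<and> lessP d rs (a + q) (a + p)})"

definition Wn :: "nat \<Rightarrow> nat \<Rightarrow> nat list \<Rightarrow> nat \<Rightarrow> nat list" where
  "Wn n d rs a = map (rk n d rs a) [0..<Suc n]"

definition mkw :: "nat \<Rightarrow> nat \<Rightarrow> nat list \<Rightarrow> nat list list" where
  "mkw n d rs = map (Wn n d rs) [0..<d]"

lemma lessP_irrefl: "\<not> lessP d rs x x" by (simp add: lessP_def)

lemma lessP_asym: "lessP d rs x y \<Longrightarrow> \<not> lessP d rs y x" by (auto simp: lessP_def)

lemma lessP_total: "x \<noteq> y \<Longrightarrow> lessP d rs x y \<or> lessP d rs y x"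
  by (auto simp: lessP_def)

lemma lessP_per: "lessP d rs (x + d) (y + d) = lessP d rs x y"
  by (simp add: lessP_def)

lemma lessP_per_mult: "lessP d rs (x + d * k) (y + d * k) = lessP d rs x y"
proof (induction k)
  case (Suc k)
  have "lessP d rs (x + d * Suc k) (y + d * Suc k) = lessP d rs ((x + d * k) + d) ((y + d * k) + d)"
    by (simp add: algebra_simps)
  then show ?case using Suc lessP_per by simp
qed simp

lemma noC1:
  assumes "i < m" "m < l"
  shows "\<not> (lessP d rs i m \<and> lessP d rs m l \<and> lessP d rs l i)"
  using assms by (auto simp: lessP_def)

lemma noC2:
  assumes rs: "rs \<in> Rset n d" and d: "1 \<le> d" and "i < m" "m < l" "l - i \<le> n"
  shows "\<not> (lessP d rs i l \<and> lessP d rs l m \<and> lessP d rs m i)"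
proof
  assume H: "lessP d rs i l \<and> lessP d rs l m \<and> lessP d rs m i"
  have h1: "m - i \<le> rs!(m mod d)" using H assms by (auto simp: lessP_def)
  have h2: "l - m \<le> rs!(l mod d)" using H assms by (auto simp: lessP_def)
  have h3: "rs!(l mod d) < l - i" using H assms by (auto simp: lessP_def)
  have "rs!((l - (l - m)) mod d) + (l - m) \<le> rs!(l mod d)"
    by (rule Rv_D[OF Rset_D(3)[OF rs d]]) (use assms h2 h3 in auto)
  hence "rs!(m mod d) + (l - m) \<le> rs!(l mod d)" using assms by simp
  thus False using h1 h3 assms by simp
qed

lemma no_cycle:
  assumes rs: "rs \<in> Rset n d" and d: "1 \<le> d"
    and w: "a \<le> x" "x \<le> a + n" "a \<le> y" "y \<le> a + n" "a \<le> z" "z \<le> a + n"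
    and dist: "x \<noteq> y" "y \<noteq> z" "x \<noteq> z"
    and c: "lessP d rs x y" "lessP d rs y z" "lessP d rs z x"
  shows False
proof -
  have C1: "\<not> (lessP d rs i m \<and> lessP d rs m l \<and> lessP d rs l i)" if "i < m" "m < l" for i m l
    using noC1[OF that] .
  have C2: "\<not> (lessP d rs i l \<and> lessP d rs l m \<and> lessP d rs m i)"
    if "i < m" "m < l" "a \<le> i" "l \<le> a + n" for i m l
    using noC2[OF rs d that(1,2)] that by simp
  show False
  proof (cases "x < y")
    case xy: True
    show False
    proof (cases "y < z")
      case True thus False using C1[of x y z] xy c by blast
    next
      case False
      hence zy: "z < y" using dist by simp
      show False
      proof (cases "x < z")
        case True thus False using C2[of x z y] zy c w by blast
      next
        case False
        hence "z < x" using dist by simp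
        thus False using C1[of z x y] xy c by blast
      qed
    qed
  next
    case False
    hence yx: "y < x" using dist by simp
    show False
    proof (cases "x < z")
      case True thus False using C2[of y x z] yx c w by blast
    next
      case False
      hence zx: "z < x" using dist by simp
      show False
      proof (cases "y < z")
        case True thus False using C1[of y z x] zx c by blast
      next
        case False
        hence "z < y" using dist by simp
        thus False using C2[of z y x] yx c w by blast
      qed
    qed
  qed
qed

lemma lessP_trans:
  assumes rs: "rs \<in> Rset n d" and d: "1 \<le> d"
    and w: "a \<le> x" "x \<le> a + n" "a \<le> y" "y \<le> a + n" "a \<le> z" "z \<le> a + n"
    and c: "lessP d rs x y" "lessP d rs y z"
  shows "lessP d rs x z"
proof -
  have xy: "x \<noteq> y" using c lessP_irrefl by metis
  have yz: "y \<noteq> z" using c lessP_irrefl by metis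
  have xz: "x \<noteq> z" using c lessP_asym by metis
  show ?thesis
  proof (rule ccontr)
    assume "\<not> lessP d rs x z"
    hence "lessP d rs z x" using lessP_total xz by blast
    thus False using no_cycle[OF rs d w xy yz xz c] by blast
  qed
qed

lemma rk_mono:
  assumes rs: "rs \<in> Rset n d" and d: "1 \<le> d" and pq: "p \<le> n" "q \<le> n"
    and l: "lessP d rs (a + p) (a + q)"
  shows "rk n d rs a p < rk n d rs a q"
proof -
  have sub: "{q'. q' \<le> n \<and> lessP d rs (a + q') (a + p)} \<subseteq> {q'. q' \<le> n \<and> lessP d rs (a + q') (a + q)}"
  proof
    fix x assume "x \<in> {q'. q' \<le> n \<and> lessP d rs (a + q') (a + p)}"
    hence x: "x \<le> n" "lessP d rs (a + x) (a + p)" by auto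
    have "lessP d rs (a + x) (a + q)" by (rule lessP_trans[OF rs d, where a=a, OF _ _ _ _ _ _ x(2) l]) (use x pq in auto)
    thus "x \<in> {q'. q' \<le> n \<and> lessP d rs (a + q') (a + q)}" using x by simp
  qed
  have "p \<in> {q'. q' \<le> n \<and> lessP d rs (a + q') (a + q)}" using pq l by simp
  moreover have "p \<notin> {q'. q' \<le> n \<and> lessP d rs (a + q') (a + p)}" using lessP_irrefl by simp
  ultimately have "{q'. q' \<le> n \<and> lessP d rs (a + q') (a + p)} \<subset> {q'. q' \<le> n \<and> lessP d rs (a + q') (a + q)}"
    using sub by blast
  hence "card {q'. q' \<le> n \<and> lessP d rs (a + q') (a + p)} < card {q'. q' \<le> n \<and> lessP d rs (a + q') (a + q)}"
    by (rule psubset_card_mono[rotated]) simp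
  thus ?thesis by (simp add: rk_def)
qed

lemma rk_less_iff:
  assumes rs: "rs \<in> Rset n d" and d: "1 \<le> d" and pq: "p \<le> n" "q \<le> n"
  shows "rk n d rs a p < rk n d rs a q \<longleftrightarrow> lessP d rs (a + p) (a + q)"
proof
  assume l: "rk n d rs a p < rk n d rs a q"
  show "lessP d rs (a + p) (a + q)"
  proof (rule ccontr)
    assume nl: "\<not> lessP d rs (a + p) (a + q)"
    show False
    proof (cases "p = q")
      case True thus False using l by simp
    next
      case False
      hence "lessP d rs (a + q) (a + p)" using lessP_total[of "a + p" "a + q" d rs] nl by simp
      hence "rk n d rs a q < rk n d rs a p" by (rule rk_mono[OF rs d pq(2,1)])
      thus False using l by simp
    qed
  qed
qed (rule rk_mono[OF rs d pq])

lemma rk_bound: "1 \<le> rk n d rs a p \<and> (p \<le> n \<longrightarrow> rk n d rs a p \<le> n + 1)"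
proof -
  have "p \<le> n \<Longrightarrow> card {q. q \<le> n \<and> lessP d rs (a + q) (a + p)} \<le> n"
  proof -
    assume p: "p \<le> n"
    have "{q. q \<le> n \<and> lessP d rs (a + q) (a + p)} \<subseteq> {..n} - {p}" using lessP_irrefl by auto
    hence "card {q. q \<le> n \<and> lessP d rs (a + q) (a + p)} \<le> card ({..n} - {p})"
      by (rule card_mono[rotated]) simp
    thus ?thesis using p by simp
  qed
  thus ?thesis by (simp add: rk_def)
qed

lemma Wn_length[simp]: "length (Wn n d rs a) = Suc n" by (simp add: Wn_def)

lemma Wn_nth: "p < Suc n \<Longrightarrow> Wn n d rs a ! p = rk n d rs a p"
  by (simp add: Wn_def del: upt_Suc)

lemma Wn_less_iff:
  assumes rs: "rs \<in> Rset n d" and d: "1 \<le> d" and pq: "p < Suc n" "q < Suc n"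
  shows "Wn n d rs a ! p < Wn n d rs a ! q \<longleftrightarrow> lessP d rs (a + p) (a + q)"
  using rk_less_iff[OF rs d, of p q a] pq by (simp add: Wn_nth)

lemma Wn_distinct:
  assumes rs: "rs \<in> Rset n d" and d: "1 \<le> d"
  shows "distinct (Wn n d rs a)"
proof -
  have "Wn n d rs a ! p \<noteq> Wn n d rs a ! q" if "p < Suc n" "q < Suc n" "p \<noteq> q" for p q
  proof -
    have "lessP d rs (a + p) (a + q) \<or> lessP d rs (a + q) (a + p)" using lessP_total that by simp
    thus ?thesis using Wn_less_iff[OF rs d that(1,2), of a] Wn_less_iff[OF rs d that(2,1), of a] by auto
  qed
  thus ?thesis by (auto simp: distinct_conv_nth)
qed

lemma Wn_perm:
  assumes rs: "rs \<in> Rset n d" and d: "1 \<le> d"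
  shows "Wn n d rs a \<in> perms (n + 1)"
proof -
  have dist: "distinct (Wn n d rs a)" by (rule Wn_distinct[OF rs d])
  have sub: "set (Wn n d rs a) \<subseteq> {1..n+1}"
    using rk_bound by (auto simp: Wn_def)
  have "card (set (Wn n d rs a)) = n + 1" using dist by (simp add: distinct_card)
  hence "set (Wn n d rs a) = {1..n+1}" using sub by (intro card_subset_eq) auto
  thus ?thesis using dist by (simp add: perms_def)
qed

lemma Wn_avoid:
  assumes rs: "rs \<in> Rset n d" and d: "1 \<le> d"
  shows "avoids312 (Wn n d rs a)"
  unfolding avoids312_def
proof
  assume "\<exists>i j k. i < j \<and> j < k \<and> k < length (Wn n d rs a) \<and>
     Wn n d rs a ! j < Wn n d rs a ! k \<and> Wn n d rs a ! k < Wn n d rs a ! i"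
  then obtain i j k where ijk: "i < j" "j < k" "k < Suc n"
    and c1: "Wn n d rs a ! j < Wn n d rs a ! k" and c2: "Wn n d rs a ! k < Wn n d rs a ! i" by auto
  have "lessP d rs (a + j) (a + k)" using c1 Wn_less_iff[OF rs d, of j k a] ijk by simp
  moreover have "lessP d rs (a + k) (a + i)" using c2 Wn_less_iff[OF rs d, of k i a] ijk by simp
  ultimately show False using ijk by (auto simp: lessP_def)
qed

lemma Wn_per: "Wn n d rs (a + d) = Wn n d rs a"
proof -
  have "rk n d rs (a + d) p = rk n d rs a p" for p
  proof -
    have "lessP d rs (a + d + q) (a + d + p) = lessP d rs (a + q) (a + p)" for q
      using lessP_per[of d rs "a + q" "a + p"] by (simp add: algebra_simps)
    thus ?thesis by (simp add: rk_def)
  qed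
  thus ?thesis by (simp add: Wn_def)
qed

lemma Wn_mod: "Wn n d rs (a mod d) = Wn n d rs a"
proof -
  have "Wn n d rs (b + d * k) = Wn n d rs b" for b k
  proof (induction k)
    case (Suc k)
    have "Wn n d rs (b + d * Suc k) = Wn n d rs ((b + d * k) + d)" by (simp add: algebra_simps)
    also have "\<dots> = Wn n d rs (b + d * k)" by (rule Wn_per)
    finally show ?case using Suc by simp
  qed simp
  from this[of "a mod d" "a div d"] show ?thesis by simp
qed

lemma Wn_link:
  assumes rs: "rs \<in> Rset n d" and d: "1 \<le> d"
  shows "edge_head (Wn n d rs a) = edge_tail (Wn n d rs (Suc a))"
proof -
  let ?A = "Wn n d rs a" and ?B = "Wn n d rs (Suc a)"
  have "standardize (tl ?A) = standardize (butlast ?B)"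
  proof (rule std_pattern_eq)
    show "distinct (tl ?A)" using Wn_distinct[OF rs d] by (simp add: distinct_tl)
    show "distinct (butlast ?B)" using Wn_distinct[OF rs d] by (simp add: distinct_butlast)
    show "length (tl ?A) = length (butlast ?B)" by simp
    fix i j assume ij: "i < length (tl ?A)" "j < length (tl ?A)"
    hence ij': "i < n" "j < n" by auto
    have "tl ?A ! i < tl ?A ! j \<longleftrightarrow> ?A ! Suc i < ?A ! Suc j" using ij' by (simp add: nth_tl)
    also have "\<dots> \<longleftrightarrow> lessP d rs (a + Suc i) (a + Suc j)"
      by (rule Wn_less_iff[OF rs d]) (use ij' in auto)
    also have "\<dots> \<longleftrightarrow> lessP d rs (Suc a + i) (Suc a + j)" by simp
    also have "\<dots> \<longleftrightarrow> ?B ! i < ?B ! j"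
      by (rule Wn_less_iff[OF rs d, symmetric]) (use ij' in auto)
    also have "\<dots> \<longleftrightarrow> butlast ?B ! i < butlast ?B ! j" using ij' by (simp add: nth_butlast)
    finally show "tl ?A ! i < tl ?A ! j \<longleftrightarrow> butlast ?B ! i < butlast ?B ! j" .
  qed
  thus ?thesis by (simp add: edge_head_def edge_tail_def)
qed

lemma mkw_cw:
  assumes rs: "rs \<in> Rset n d" and d: "1 \<le> d"
  shows "mkw n d rs \<in> closed_walks n d"
proof -
  have len: "length (mkw n d rs) = d" by (simp add: mkw_def)
  have nth: "i < d \<Longrightarrow> mkw n d rs ! i = Wn n d rs i" for i by (simp add: mkw_def)
  have "set (mkw n d rs) \<subseteq> Av312 (n + 1)"
    using Wn_perm[OF rs d] Wn_avoid[OF rs d] by (auto simp: mkw_def Av312_def)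
  moreover have "\<forall>i. i + 1 < d \<longrightarrow> edge_head (mkw n d rs ! i) = edge_tail (mkw n d rs ! (i + 1))"
    using Wn_link[OF rs d] nth by simp
  moreover have "edge_head (mkw n d rs ! (d - 1)) = edge_tail (mkw n d rs ! 0)"
  proof -
    have "mkw n d rs ! 0 = Wn n d rs (Suc (d - 1))"
      using nth[of 0] d Wn_per[of n d rs 0] by simp
    thus ?thesis using nth[of "d - 1"] d Wn_link[OF rs d, of "d - 1"] by simp
  qed
  ultimately show ?thesis using len by (simp add: closed_walks_def)
qed

lemma rsw_mkw:
  assumes rs: "rs \<in> Rset n d" and d: "1 \<le> d" "d \<le> n"
  shows "rsw n d (mkw n d rs) = rs"
proof (rule nth_equalityI)
  show "length (rsw n d (mkw n d rs)) = length rs" using Rset_D(1)[OF rs d(1)] by (simp add: rsw_def)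
  fix l assume "l < length (rsw n d (mkw n d rs))"
  hence l: "l < d" by (simp add: rsw_def)
  define b where "b = l + d * n"
  have bn: "n \<le> b" using n_le_dn[OF d(1), of n] unfolding b_def by linarith
  have bm: "b mod d = l" using l by (simp add: b_def)
  have rb: "rs!(b mod d) \<le> n" by (rule Rset_D(2)[OF rs d(1)])
  have "{j\<in>{1..n}. mkw n d rs!((b-j) mod d)!j < mkw n d rs!((b-j) mod d)!0} = {1..rs!(b mod d)}"
  proof (rule set_eqI)
    fix j
    show "j \<in> {j\<in>{1..n}. mkw n d rs!((b-j) mod d)!j < mkw n d rs!((b-j) mod d)!0} \<longleftrightarrow> j \<in> {1..rs!(b mod d)}"
    proof (cases "j \<in> {1..n}")
      case True
      have "mkw n d rs!((b-j) mod d) = Wn n d rs (b - j)"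
        using d by (simp add: mkw_def Wn_mod)
      moreover have "Wn n d rs (b - j) ! j < Wn n d rs (b - j) ! 0 \<longleftrightarrow> lessP d rs (b - j + j) (b - j + 0)"
        by (rule Wn_less_iff[OF rs d(1)]) (use True in auto)
      moreover have "lessP d rs (b - j + j) (b - j + 0) \<longleftrightarrow> j \<le> rs!(b mod d)"
        using True bn by (auto simp: lessP_def)
      ultimately show ?thesis using True rb by auto
    next
      case False thus ?thesis using rb by auto
    qed
  qed
  hence "Cnt (mkw n d rs) n d b = rs!(b mod d)" by (simp add: Cnt_def)
  thus "rsw n d (mkw n d rs) ! l = rs ! l" using l bm by (simp add: rsw_def b_def)
qed

lemma card_cw_Rset:
  assumes d: "1 \<le> d" "d \<le> n"
  shows "card (closed_walks n d) = card (Rset n d)"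
proof -
  have "rsw n d ` closed_walks n d = Rset n d"
  proof
    show "rsw n d ` closed_walks n d \<subseteq> Rset n d" using rsw_in_Rset[OF _ d] by blast
    show "Rset n d \<subseteq> rsw n d ` closed_walks n d"
    proof
      fix rs assume rs: "rs \<in> Rset n d"
      have "rs = rsw n d (mkw n d rs)" using rsw_mkw[OF rs d] by simp
      thus "rs \<in> rsw n d ` closed_walks n d" using mkw_cw[OF rs d(1)] by blast
    qed
  qed
  thus ?thesis using card_image[OF rsw_inj[OF d]] by simp
qed


theorem theorem5p1:
  fixes n d :: nat
  assumes "1 \<le> n" and "1 \<le> d" and "d \<le> n"
  shows "card (closed_walks n d) = (2 * d) choose d"
proof -
  have "card (closed_walks n d) = card (Rset n d)" by (rule card_cw_Rset) (use assms in auto)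
  also have "\<dots> = card (Uset d)" by (rule card_Rset_U) (use assms in auto)
  also have "\<dots> = (d + d) choose d" unfolding Uset_def by (rule card_lists_sum_le)
  finally show ?thesis by (simp add: mult_2)
qed

end
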